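(* Let $r_1,r_2\in(0,1)$, $a_1,a_2\in(1,\infty)$, and for $i=1,2$ let $l_i$ be Lebesgue measurable, integrable, with $\int_{\mathbb{R}}l_i=1$, $\int_{\mathbb{R}}l_i(y)e^{\lambda y}dy<\infty$ for all $\lambda\in\mathbb{R}$, and $l_i(y)=l_i(-y)\ge0$. Define $Q=(Q_1,Q_2)$ on $\mathcal{C}_{[\theta,\mathbf{1}]}$ by \[ Q_1(\phi,\psi)(t)=1-\int_{\mathbb{R}}(1-\phi (y))e^{r_{1}(\phi (y)-a_{1}\psi(y))}l_{1}(t-y)\,dy,\quad Q_2(\phi,\psi)(t)=\int_{\mathbb{R}} \psi (y)e^{r_{2}(1-a_2-\psi (y)+a_{2}\phi (y))}l_{2}(t-y)\,dy. \] Then the fixed points $\theta=(0,0)$ and $M=(1,1)$ are strongly stable from above and below, respectively: there exist $\delta>0$ and unit vectors $E_4,E_5\in\mathbb{R}^2$ with $\theta\ll E_4,E_5\ll\mathbf{1}$ such that \[ Q[\eta E_4]\ll \eta E_4,\qquad Q[M-\eta E_5]\gg M-\eta E_5\qquad\text{for all }\eta\in(0,\delta] \] (constant vectors regarded as constant functions). Moreover, the set $F\setminus\{\theta,M\}$ is totally unordered, where $F$ is the set of constant fixed points of $Q$ with values in $[\theta,M]$.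
   Context: $\mathcal{C}$ is the space of uniformly continuous bounded functions $\mathbb{R}\to\mathbb{R}^2$ with the componentwise order; $\mathcal{C}_{[\theta,\mathbf{1}]}=\{U\in\mathcal{C}: (0,0)\le U(x)\le (1,1)\ \forall x\}$. For $U=(u_1,u_2),V=(v_1,v_2)$, $U\gg V$ means $u_i(x)>v_i(x)$ for $i=1,2$ and all $x$ (and $U\ll V$ analogously). A set is totally unordered if no two distinct elements are comparable in the componentwise order. *)

theory Defs
  imports "HOL-Analysis.Analysis"
begin

text \<open>Functions R -> R^2 are represented as real \<Rightarrow> real \<times> real, componentwise order.\<close>

definition strict_below :: "(real \<Rightarrow> real \<times> real) \<Rightarrow> (real \<Rightarrow> real \<times> real) \<Rightarrow> bool"
  (infix "\<lless>" 50) where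
  "U \<lless> V \<longleftrightarrow> (\<forall>x. fst (U x) < fst (V x) \<and> snd (U x) < snd (V x))"

definition const_fun :: "real \<times> real \<Rightarrow> (real \<Rightarrow> real \<times> real)" where
  "const_fun E = (\<lambda>_. E)"

definition Qop :: "real \<Rightarrow> real \<Rightarrow> real \<Rightarrow> real \<Rightarrow> (real \<Rightarrow> real) \<Rightarrow> (real \<Rightarrow> real)
    \<Rightarrow> (real \<Rightarrow> real \<times> real) \<Rightarrow> (real \<Rightarrow> real \<times> real)" where
  "Qop r1 r2 a1 a2 l1 l2 U = (\<lambda>t.
     (1 - (LINT y|lebesgue. (1 - fst (U y)) * exp (r1 * (fst (U y) - a1 * snd (U y))) * l1 (t - y)),
      (LINT y|lebesgue. snd (U y) * exp (r2 * (1 - a2 - snd (U y) + a2 * fst (U y))) * l2 (t - y))))"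

definition const_fixed_points :: "real \<Rightarrow> real \<Rightarrow> real \<Rightarrow> real \<Rightarrow> (real \<Rightarrow> real) \<Rightarrow> (real \<Rightarrow> real)
    \<Rightarrow> (real \<times> real) set" where
  "const_fixed_points r1 r2 a1 a2 l1 l2 =
     {E. 0 \<le> fst E \<and> fst E \<le> 1 \<and> 0 \<le> snd E \<and> snd E \<le> 1 \<and>
         Qop r1 r2 a1 a2 l1 l2 (const_fun E) = const_fun E}"

definition totally_unordered :: "(real \<times> real) set \<Rightarrow> bool" where
  "totally_unordered S \<longleftrightarrow>
     (\<forall>p\<in>S. \<forall>q\<in>S. p \<noteq> q \<longrightarrow> \<not> (fst p \<le> fst q \<and> snd p \<le> snd q))"

definition kernel_ok :: "(real \<Rightarrow> real) \<Rightarrow> bool" where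
  "kernel_ok l \<longleftrightarrow> l \<in> borel_measurable lebesgue \<and> integrable lebesgue l \<and>
     (LINT y|lebesgue. l y) = 1 \<and>
     (\<forall>c::real. integrable lebesgue (\<lambda>y. l y * exp (c * y))) \<and>
     (\<forall>y. l y = l (- y) \<and> 0 \<le> l y)"

end

theory Submission
  imports Defs
begin


lemma kern1:
  assumes "kernel_ok l"
  shows "(LINT y|lebesgue. l (t - y)) = 1"
proof -
  have "(LINT y|lebesgue. l y) = 1" using assms by (simp add: kernel_ok_def)
  moreover have "(LINT y|lebesgue. l y) = (LINT y|lebesgue. l (t + (-1) * y))"
    using lebesgue_integral_real_affine[of "-1" l t] by simp
  ultimately show ?thesis by simp
qed

lemma Qconst:
  assumes "kernel_ok l1" "kernel_ok l2"
  shows "Qop r1 r2 a1 a2 l1 l2 (const_fun (u, v)) =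
     const_fun (1 - (1 - u) * exp (r1 * (u - a1 * v)), v * exp (r2 * (1 - a2 - v + a2 * u)))"
  by (simp add: Qop_def const_fun_def kern1[OF assms(1)] kern1[OF assms(2)])

lemma Qconst':
  assumes "kernel_ok l1" "kernel_ok l2"
  shows "Qop r1 r2 a1 a2 l1 l2 (const_fun p) =
     const_fun (1 - (1 - fst p) * exp (r1 * (fst p - a1 * snd p)), snd p * exp (r2 * (1 - a2 - snd p + a2 * fst p)))"
  using Qconst[OF assms, of r1 r2 a1 a2 "fst p" "snd p"] by simp

lemma lin_aux:
  fixes X Y W a :: real
  assumes "X < Y" "0 < W" "Y \<le> (a - 1) / 2" "1 < a"
  shows "1 - a - W + X < 0"
proof -
  have "2 * Y \<le> a - 1" using assms(3) by simp
  thus ?thesis using assms(1,2,4) by linarith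
qed

theorem lemma4:
  fixes r1 r2 a1 a2 :: real and l1 l2 :: "real \<Rightarrow> real"
  assumes "0 < r1" "r1 < 1" "0 < r2" "r2 < 1" "1 < a1" "1 < a2"
    and "kernel_ok l1" and "kernel_ok l2"
  shows "(\<exists>\<delta>>0. \<exists>E4 E5 :: real \<times> real.
            0 < fst E4 \<and> fst E4 < 1 \<and> 0 < snd E4 \<and> snd E4 < 1 \<and> norm E4 = 1 \<and>
            0 < fst E5 \<and> fst E5 < 1 \<and> 0 < snd E5 \<and> snd E5 < 1 \<and> norm E5 = 1 \<and>
            (\<forall>\<eta>. 0 < \<eta> \<and> \<eta> \<le> \<delta> \<longrightarrow>
               Qop r1 r2 a1 a2 l1 l2 (const_fun (\<eta> *\<^sub>R E4)) \<lless> const_fun (\<eta> *\<^sub>R E4) \<and>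
               const_fun ((1, 1) - \<eta> *\<^sub>R E5) \<lless> Qop r1 r2 a1 a2 l1 l2 (const_fun ((1, 1) - \<eta> *\<^sub>R E5))))
         \<and> totally_unordered (const_fixed_points r1 r2 a1 a2 l1 l2 - {(0, 0), (1, 1)})"
proof
  define s4 where "s4 = sqrt (4 * a1^2 + 1)"
  define s5 where "s5 = sqrt (1 + 4 * a2^2)"
  define E4 where "E4 = (2 * a1 / s4, 1 / s4)"
  define E5 where "E5 = (1 / s5, 2 * a2 / s5)"
  define \<delta> where "\<delta> = min (1/2) (min ((a2 - 1) / (2 * a2)) ((a1 - 1) / (2 * a1)))"
  have s4p: "s4 > 2 * a1" unfolding s4_def
    by (rule real_less_rsqrt) (simp add: power_mult_distrib)
  have s5p: "s5 > 2 * a2" unfolding s5_def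
    by (rule real_less_rsqrt) (simp add: power_mult_distrib)
  have s4sq: "s4^2 = 4 * a1^2 + 1" unfolding s4_def by simp
  have s5sq: "s5^2 = 1 + 4 * a2^2" unfolding s5_def by simp
  have nE4: "norm E4 = 1"
  proof -
    have "norm E4 = sqrt ((2*a1/s4)^2 + (1/s4)^2)" unfolding E4_def by (simp add: norm_Pair power_divide)
    also have "(2*a1/s4)^2 + (1/s4)^2 = (4*a1^2+1)/s4^2" by (simp add: power_divide power_mult_distrib add_divide_distrib add.commute)
    also have "\<dots> = 1"
    proof -
      have "(0::real) < 4*a1^2 + 1" by (intro add_nonneg_pos) auto
      thus ?thesis using s4sq by simp
    qed
    finally show ?thesis by simp
  qed
  have nE5: "norm E5 = 1"
  proof -
    have "norm E5 = sqrt ((1/s5)^2 + (2*a2/s5)^2)" unfolding E5_def by (simp add: norm_Pair power_divide)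
    also have "(1/s5)^2 + (2*a2/s5)^2 = (1 + 4*a2^2)/s5^2" by (simp add: power_divide power_mult_distrib add_divide_distrib)
    also have "\<dots> = 1"
    proof -
      have "(0::real) < 1 + 4*a2^2" by (intro add_pos_nonneg) auto
      thus ?thesis using s5sq by simp
    qed
    finally show ?thesis by simp
  qed
  have s4g: "s4 > 1" "s4 > 0" using s4p assms(5) by linarith+
  have s5g: "s5 > 1" "s5 > 0" using s5p assms(6) by linarith+
  have e41: "0 < fst E4" "fst E4 < 1" "0 < snd E4" "snd E4 < 1"
    unfolding E4_def using s4p s4g assms(5) by (simp_all add: divide_less_eq_1_pos)
  have e51: "0 < fst E5" "fst E5 < 1" "0 < snd E5" "snd E5 < 1"
    unfolding E5_def using s5p s5g assms(6) by (simp_all add: divide_less_eq_1_pos)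
  have e4c: "fst E4 - a1 * snd E4 > 0"
  proof -
    have "fst E4 - a1 * snd E4 = a1 / s4" unfolding E4_def by (simp add: diff_divide_distrib)
    thus ?thesis using s4g assms(5) by simp
  qed
  have e5c: "snd E5 - a2 * fst E5 > 0"
  proof -
    have "snd E5 - a2 * fst E5 = a2 / s5" unfolding E5_def by (simp add: diff_divide_distrib)
    thus ?thesis using s5g assms(6) by simp
  qed
  have dpos: "\<delta> > 0" unfolding \<delta>_def using assms(5,6) by simp
  have main: "Qop r1 r2 a1 a2 l1 l2 (const_fun (\<eta> *\<^sub>R E4)) \<lless> const_fun (\<eta> *\<^sub>R E4) \<and>
               const_fun ((1, 1) - \<eta> *\<^sub>R E5) \<lless> Qop r1 r2 a1 a2 l1 l2 (const_fun ((1, 1) - \<eta> *\<^sub>R E5))"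
    if h: "0 < \<eta>" "\<eta> \<le> \<delta>" for \<eta>
  proof -
    obtain e1 e2 where E4e: "E4 = (e1, e2)" by fastforce
    obtain f1 f2 where E5e: "E5 = (f1, f2)" by fastforce
    have hd: "\<eta> \<le> 1/2" "\<eta> \<le> (a2 - 1) / (2 * a2)" "\<eta> \<le> (a1 - 1) / (2 * a1)"
      using h(2) unfolding \<delta>_def by auto
    have hd2: "\<eta> * a2 \<le> (a2 - 1)/2" using hd(2) assms(6) by (simp add: field_simps)
    have hd1: "\<eta> * a1 \<le> (a1 - 1)/2" using hd(3) assms(5) by (simp add: field_simps)
    note e41' = e41[unfolded E4e, simplified] and e51' = e51[unfolded E5e, simplified]
    have c1: "1 - (1 - \<eta>*e1) * exp (r1 * (\<eta>*e1 - a1 * (\<eta>*e2))) < \<eta>*e1"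
    proof -
      have "r1 * (\<eta>*e1 - a1 * (\<eta>*e2)) > 0"
        using e4c[unfolded E4e, simplified] h(1) assms(1)
        by (simp add: right_diff_distrib[symmetric] mult.assoc mult.left_commute[of a1 \<eta>])
      hence "exp (r1 * (\<eta>*e1 - a1 * (\<eta>*e2))) > 1" by simp
      moreover have "1 - \<eta>*e1 > 0"
      proof -
        have "\<eta>*e1 < \<eta>*1" using e41' h(1) by (intro mult_strict_left_mono) auto
        thus ?thesis using hd(1) by linarith
      qed
      ultimately have "(1 - \<eta>*e1) * exp (r1 * (\<eta>*e1 - a1 * (\<eta>*e2))) > (1 - \<eta>*e1)"
        using mult_strict_left_mono[of 1 "exp (r1 * (\<eta>*e1 - a1 * (\<eta>*e2)))" "1 - \<eta>*e1"] by simp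
      thus ?thesis by simp
    qed
    have c2: "\<eta>*e2 * exp (r2 * (1 - a2 - \<eta>*e2 + a2 * (\<eta>*e1))) < \<eta>*e2"
    proof -
      have "\<eta>*e1 < \<eta>*1" using e41' h(1) by (intro mult_strict_left_mono) auto
      hence A: "a2 * (\<eta>*e1) < a2 * \<eta>" using assms(6) by (intro mult_strict_left_mono) auto
      have B: "\<eta>*e2 > 0" using e41' h(1) by simp
      have "1 - a2 - \<eta>*e2 + a2 * (\<eta>*e1) < 0" using lin_aux[OF A B _ assms(6)] hd2
        by (simp add: mult.commute)
      hence X: "exp (r2 * (1 - a2 - \<eta>*e2 + a2 * (\<eta>*e1))) < 1" using assms(3)
        by (simp add: mult_pos_neg)
      show ?thesis using mult_strict_left_mono[OF X B] by simp
    qed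
    have c3: "1 - \<eta>*f1 < 1 - (1 - (1 - \<eta>*f1)) * exp (r1 * ((1 - \<eta>*f1) - a1 * (1 - \<eta>*f2)))"
    proof -
      have "\<eta>*f2 < \<eta>*1" using e51' h(1) by (intro mult_strict_left_mono) auto
      hence A: "a1 * (\<eta>*f2) < a1 * \<eta>" using assms(5) by (intro mult_strict_left_mono) auto
      have B: "\<eta>*f1 > 0" using e51' h(1) by simp
      have C: "(1 - \<eta>*f1) - a1 * (1 - \<eta>*f2) = 1 - \<eta>*f1 - a1 + a1 * (\<eta>*f2)"
        by (simp add: algebra_simps)
      have "(1 - \<eta>*f1) - a1 * (1 - \<eta>*f2) < 0" unfolding C using lin_aux[OF A B _ assms(5)] hd1
        by (simp add: mult.commute algebra_simps)
      hence X: "exp (r1 * ((1 - \<eta>*f1) - a1 * (1 - \<eta>*f2))) < 1" using assms(1)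
        by (simp add: mult_pos_neg)
      show ?thesis using mult_strict_left_mono[OF X B] by simp
    qed
    have c4: "1 - \<eta>*f2 < (1 - \<eta>*f2) * exp (r2 * (1 - a2 - (1 - \<eta>*f2) + a2 * (1 - \<eta>*f1)))"
    proof -
      have eq: "1 - a2 - (1 - \<eta>*f2) + a2 * (1 - \<eta>*f1) = \<eta> * (f2 - a2 * f1)"
        by (simp add: algebra_simps)
      have "r2 * (\<eta> * (f2 - a2 * f1)) > 0"
        using e5c[unfolded E5e, simplified] h(1) assms(3) by simp
      hence "exp (r2 * (1 - a2 - (1 - \<eta>*f2) + a2 * (1 - \<eta>*f1))) > 1" unfolding eq by simp
      moreover have "1 - \<eta>*f2 > 0"
      proof -
        have "\<eta>*f2 < \<eta>*1" using e51' h(1) by (intro mult_strict_left_mono) auto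
        thus ?thesis using hd(1) by linarith
      qed
      ultimately show ?thesis
        using mult_strict_left_mono[of 1 "exp (r2 * (1 - a2 - (1 - \<eta>*f2) + a2 * (1 - \<eta>*f1)))" "1 - \<eta>*f2"] by simp
    qed
    show ?thesis
      unfolding Qconst'[OF assms(7,8)] E4e E5e
      using c1 c2 c3 c4 by (simp add: strict_below_def const_fun_def)
  qed
  show "\<exists>\<delta>>0. \<exists>E4 E5 :: real \<times> real.
            0 < fst E4 \<and> fst E4 < 1 \<and> 0 < snd E4 \<and> snd E4 < 1 \<and> norm E4 = 1 \<and>
            0 < fst E5 \<and> fst E5 < 1 \<and> 0 < snd E5 \<and> snd E5 < 1 \<and> norm E5 = 1 \<and>
            (\<forall>\<eta>. 0 < \<eta> \<and> \<eta> \<le> \<delta> \<longrightarrow>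
               Qop r1 r2 a1 a2 l1 l2 (const_fun (\<eta> *\<^sub>R E4)) \<lless> const_fun (\<eta> *\<^sub>R E4) \<and>
               const_fun ((1, 1) - \<eta> *\<^sub>R E5) \<lless> Qop r1 r2 a1 a2 l1 l2 (const_fun ((1, 1) - \<eta> *\<^sub>R E5)))"
    apply (rule exI[where x=\<delta>], rule conjI[OF dpos])
    apply (rule exI[where x=E4], rule exI[where x=E5])
    using e41 e51 nE4 nE5 main by simp
next
  have cls: "(fst p = 1 \<and> snd p = 0) \<or> (fst p < 1 \<and> snd p > 0 \<and> fst p = a1 * snd p \<and> snd p = 1 - a2 + a2 * fst p)"
    if p: "p \<in> const_fixed_points r1 r2 a1 a2 l1 l2 - {(0, 0), (1, 1)}" for p
  proof -
    obtain u v where pe: "p = (u, v)" by fastforce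
    have b: "0 \<le> u" "u \<le> 1" "0 \<le> v" "v \<le> 1" "(u, v) \<noteq> (0,0)" "(u,v) \<noteq> (1,1)"
      using p unfolding pe const_fixed_points_def by auto
    have "Qop r1 r2 a1 a2 l1 l2 (const_fun (u,v)) = const_fun (u,v)"
      using p unfolding pe const_fixed_points_def by auto
    hence "const_fun (1 - (1 - u) * exp (r1 * (u - a1 * v)), v * exp (r2 * (1 - a2 - v + a2 * u))) = const_fun (u,v)"
      unfolding Qconst[OF assms(7,8)] .
    hence eqs: "1 - (1 - u) * exp (r1 * (u - a1 * v)) = u" "v * exp (r2 * (1 - a2 - v + a2 * u)) = v"
      unfolding const_fun_def by (meson Pair_inject fun_cong)+
    have A: "u = 1 \<or> u = a1 * v"
    proof (cases "u = 1")
      case False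
      have H: "(1 - u) * exp (r1 * (u - a1 * v)) = 1 - u" using eqs(1) by linarith
      have R: "(1 - u) * (exp (r1 * (u - a1 * v)) - 1) = (1 - u) * exp (r1 * (u - a1 * v)) - (1 - u)"
        by (simp only: right_diff_distrib mult_1_right)
      have "(1 - u) * (exp (r1 * (u - a1 * v)) - 1) = 0" using R H by linarith
      hence "exp (r1 * (u - a1 * v)) - 1 = 0" using False by simp
      hence "exp (r1 * (u - a1 * v)) = 1" by simp
      hence "r1 * (u - a1 * v) = 0" by simp
      thus ?thesis using assms(1) by simp
    qed simp
    have B: "v = 0 \<or> v = 1 - a2 + a2 * u"
    proof (cases "v = 0")
      case False
      hence "exp (r2 * (1 - a2 - v + a2 * u)) = 1" using eqs(2) by simp
      hence "r2 * (1 - a2 - v + a2 * u) = 0" by simp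
      thus ?thesis using assms(3) by simp
    qed simp
    show ?thesis
    proof (cases "u = 1")
      case True
      hence "v = 0 \<or> v = 1" using B by simp
      thus ?thesis using True b pe by auto
    next
      case False
      hence u: "u = a1 * v" using A by simp
      hence "v \<noteq> 0" using b by auto
      hence "v = 1 - a2 + a2 * u" using B by simp
      thus ?thesis using u False b \<open>v \<noteq> 0\<close> pe by auto
    qed
  qed
  show "totally_unordered (const_fixed_points r1 r2 a1 a2 l1 l2 - {(0, 0), (1, 1)})"
    unfolding totally_unordered_def
  proof (intro ballI impI)
    fix p q assume p: "p \<in> const_fixed_points r1 r2 a1 a2 l1 l2 - {(0, 0), (1, 1)}"
      and q: "q \<in> const_fixed_points r1 r2 a1 a2 l1 l2 - {(0, 0), (1, 1)}" and ne: "p \<noteq> q"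
    have uniq: "x = y" if "fst x = a1 * snd x" "snd x = 1 - a2 + a2 * fst x"
      "fst y = a1 * snd y" "snd y = 1 - a2 + a2 * fst y" for x y :: "real \<times> real"
    proof -
      have "snd x * (a1 * a2 - 1) = a2 - 1"
      proof -
        have P: "a1 * snd x * a2 = fst x * a2" using that(1) by simp
        have R: "snd x * (a1 * a2 - 1) = a1 * snd x * a2 - snd x" by (simp add: algebra_simps)
        have Q: "fst x * a2 = a2 * fst x" by simp
        show ?thesis using P R Q that(2) by linarith
      qed
      moreover have "snd y * (a1 * a2 - 1) = a2 - 1"
      proof -
        have P: "a1 * snd y * a2 = fst y * a2" using that(3) by simp
        have R: "snd y * (a1 * a2 - 1) = a1 * snd y * a2 - snd y" by (simp add: algebra_simps)
        have Q: "fst y * a2 = a2 * fst y" by simp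
        show ?thesis using P R Q that(4) by linarith
      qed
      moreover have "a1 * a2 - 1 \<noteq> 0" using less_1_mult[OF assms(5,6)] by simp
      ultimately have "snd x = snd y" by (metis mult_right_cancel)
      thus ?thesis using that(1,3) by (simp add: prod_eq_iff)
    qed
    from cls[OF p] cls[OF q] ne uniq show "\<not> (fst p \<le> fst q \<and> snd p \<le> snd q)"
      by (smt (verit) prod_eq_iff)
  qed
qed

end
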